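(* Let $\beta_U,\beta_H,\beta_R>0$ with $\beta_U+\beta_H+\beta_R=1$ and $\beta_U<\tfrac12$, and let $\gamma\ge 0$. For $x\in[0,1]$ define $p_m(x)=\beta_U(1-\beta_U-x\beta_R)^2$, $p_f(x)=\beta_U(\beta_U+x\beta_R)(\beta_U+x\beta_R+\beta_H)$ and $$E[R_r](x)=\frac{\beta_R}{\beta_R+\beta_H}p_m(x)+\frac{(1-x)\beta_R}{\beta_H+(1-x)\beta_R}\,2\gamma\,p_m(x)+\frac{x\beta_R}{x\beta_R+\beta_U}\,\gamma\,p_f(x)+\frac{x\beta_R}{x\beta_R+\beta_U+\beta_H}\,p_f(x).$$ Then $E[R_r](0)<E[R_r](1)$ if and only if $$\gamma<\frac{\frac{\beta_H^2}{1-\beta_U}+\beta_U-\beta_H}{1-2\beta_U}.$$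
   Context: Model of an undercutting attack with safe depth $D=2$ (the undercutter abandons its fork once it is two blocks behind). The undercutter has mining-power fraction $\beta_U$, honest miners have total $\beta_H$, and rational non-undercutting miners have total $\beta_R$. A fraction $x$ of the rational mining power moves to the fork when the fork ties the main chain. $p_m$ and $p_f$ approximate the probabilities that the main chain, respectively the fork, first leads by two blocks. Fees are normalized so the undercut block holds $1$, the subsequent main-chain blocks and the first two fork blocks hold $\gamma$, and the third fork block holds $1$. $E[R_r](x)$ is the rational miners' expected revenue. *)

theory Defs
  imports Complex_Main
begin

definition p_m :: "real \<Rightarrow> real \<Rightarrow> real \<Rightarrow> real \<Rightarrow> real" where
  "p_m bU bH bR x = bU * (1 - bU - x * bR)^2"

definition p_f :: "real \<Rightarrow> real \<Rightarrow> real \<Rightarrow> real \<Rightarrow> real" where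
  "p_f bU bH bR x = bU * (bU + x * bR) * (bU + x * bR + bH)"

definition E_Rr :: "real \<Rightarrow> real \<Rightarrow> real \<Rightarrow> real \<Rightarrow> real \<Rightarrow> real" where
  "E_Rr bU bH bR \<gamma> x =
     bR / (bR + bH) * p_m bU bH bR x
   + ((1 - x) * bR) / (bH + (1 - x) * bR) * (2 * \<gamma>) * p_m bU bH bR x
   + (x * bR) / (x * bR + bU) * \<gamma> * p_f bU bH bR x
   + (x * bR) / (x * bR + bU + bH) * p_f bU bH bR x"

end

theory Submission
  imports Defs
begin

theorem mainTheorem5:
  fixes bU bH bR \<gamma> :: real
  assumes "bU > 0" "bH > 0" "bR > 0" "bU + bH + bR = 1" "bU < 1/2" "\<gamma> \<ge> 0"
  shows "E_Rr bU bH bR \<gamma> 0 < E_Rr bU bH bR \<gamma> 1 \<longleftrightarrow>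
         \<gamma> < (bH^2 / (1 - bU) + bU - bH) / (1 - 2 * bU)"
proof -
  have s: "bR + bH = 1 - bU" using assms by simp
  have s2: "bH + bR = 1 - bU" using assms by simp
  have u: "1 - bU > 0" using assms by simp
  have e0: "E_Rr bU bH bR \<gamma> 0 = bR * bU * (1 - bU) * (1 + 2*\<gamma>)"
  proof -
    have pm: "p_m bU bH bR 0 = bU * (bR + bH)^2" unfolding p_m_def using s by simp
    have pos: "bR + bH > 0" using assms by simp
    have "E_Rr bU bH bR \<gamma> 0 = bR / (bR + bH) * (bU * (bR + bH)^2) * (1 + 2*\<gamma>)"
      unfolding E_Rr_def pm using s2 by (simp add: algebra_simps add.commute add_divide_distrib)
    also have "\<dots> = bR * bU * (bR + bH) * (1 + 2*\<gamma>)"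
      using pos by (simp add: field_simps power2_eq_square)
    finally show ?thesis using s by simp
  qed
  have a1: "bR + bU > 0" using assms by simp
  have a2: "bR + bU + bH = 1" using assms by simp
  have e1: "E_Rr bU bH bR \<gamma> 1 = bU * bR * (bH^2/(1-bU) + \<gamma> + 1 - bH)"
  proof -
    have h: "1 - bU - bR = bH" using assms by simp
    have pm: "p_m bU bH bR 1 = bU * bH^2" unfolding p_m_def using h by simp
    have pf: "p_f bU bH bR 1 = bU * (bU + bR)" unfolding p_f_def using a2 by (simp add: add.commute add.left_commute)
    have t1: "bR / (bR + bH) * (bU * bH^2) = bU * bR * (bH^2/(1-bU))" using s by simp
    have t3: "bR / (bR + bU) * \<gamma> * (bU * (bU + bR)) = bU * bR * \<gamma>"
      using a1 by (simp add: field_simps)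
    have t4: "bR / (bR + bU + bH) * (bU * (bU + bR)) = bU * bR * (1 - bH)"
    proof -
      have "bU + bR = 1 - bH" using assms(4) by simp
      then show ?thesis using a2 by simp
    qed
    have "E_Rr bU bH bR \<gamma> 1 = bR / (bR + bH) * (bU * bH^2) + bR / (bR + bU) * \<gamma> * (bU * (bU + bR))
       + bR / (bR + bU + bH) * (bU * (bU + bR))"
      unfolding E_Rr_def pm pf by simp
    then show ?thesis unfolding t1 t3 t4 by (simp add: algebra_simps)
  qed
  have p: "bU * bR > 0" using assms by simp
  have "E_Rr bU bH bR \<gamma> 0 < E_Rr bU bH bR \<gamma> 1 \<longleftrightarrow>
        (1 - bU) * (1 + 2*\<gamma>) < bH^2/(1-bU) + \<gamma> + 1 - bH"
    unfolding e0 e1 using p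
    by (smt (verit) mult.commute mult.left_commute mult_less_cancel_left_pos)
  also have "\<dots> \<longleftrightarrow> \<gamma> * (1 - 2*bU) < bH^2/(1-bU) + bU - bH"
    by (simp add: algebra_simps)
  also have "\<dots> \<longleftrightarrow> \<gamma> < (bH^2 / (1 - bU) + bU - bH) / (1 - 2 * bU)"
    using assms by (simp add: pos_less_divide_eq)
  finally show ?thesis .
qed

end
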